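(* Every open subspace of an $L$-selective space is $L$-selective.
   Context: All spaces are assumed $T_1$. For spaces $Y$, $X$, a map $\varphi:Y\to\mathcal P(X)\setminus\{\emptyset\}$ is lower semicontinuous (l.s.c.) if $\{y:\varphi(y)\cap U\neq\emptyset\}$ is open in $Y$ for every open $U\subseteq X$; a selection is a map $f:Y\to X$ with $f(y)\in\varphi(y)$ for all $y$. $X$ is $Y$-selective if every l.s.c. map from $Y$ to the nonempty closed subsets of $X$ has a continuous selection; $L$-selective means $(\omega+1)$-selective, where $\omega+1$ carries the order topology. *)

theory Defs
  imports "HOL-Analysis.Analysis" "HOL-Library.Extended_Nat"
begin

definition lsc_map :: "'b topology \<Rightarrow> 'a topology \<Rightarrow> ('b \<Rightarrow> 'a set) \<Rightarrow> bool" where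
  "lsc_map Y X \<phi> \<longleftrightarrow>
     (\<forall>U. openin X U \<longrightarrow> openin Y {y \<in> topspace Y. \<phi> y \<inter> U \<noteq> {}})"

definition selective :: "'b topology \<Rightarrow> 'a topology \<Rightarrow> bool" where
  "selective Y X \<longleftrightarrow>
     (\<forall>\<phi>. (\<forall>y \<in> topspace Y. closedin X (\<phi> y) \<and> \<phi> y \<noteq> {}) \<and> lsc_map Y X \<phi> \<longrightarrow>
        (\<exists>f. continuous_map Y X f \<and> (\<forall>y \<in> topspace Y. f y \<in> \<phi> y)))"

text \<open>omega+1 with the order topology is realised as enat with its order topology.\<close>
definition L_selective :: "'a topology \<Rightarrow> bool" where
  "L_selective X \<longleftrightarrow> selective (euclidean :: enat topology) X"

end

theory Submission
  imports Defs
begin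

lemma open_enat_iff:
  "open (S::enat set) \<longleftrightarrow> (\<infinity> \<in> S \<longrightarrow> (\<exists>N::nat. {enat N<..} \<subseteq> S))"
proof
  assume "open S"
  show "\<infinity> \<in> S \<longrightarrow> (\<exists>N::nat. {enat N<..} \<subseteq> S)"
  proof
    assume "\<infinity> \<in> S"
    hence "eventually (\<lambda>x. x \<in> S) (nhds (top::enat))"
      using \<open>open S\<close> by (simp add: eventually_nhds top_enat_def) blast
    then obtain b where b: "b < (top::enat)" "\<forall>z. b < z \<longrightarrow> z \<in> S"
      using eventually_nhds_top[of "0::enat"] by (auto simp: top_enat_def zero_enat_def)
    then obtain N where "b = enat N" by (cases b) (auto simp: top_enat_def)
    thus "\<exists>N::nat. {enat N<..} \<subseteq> S" using b by auto
  qed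
next
  assume H: "\<infinity> \<in> S \<longrightarrow> (\<exists>N::nat. {enat N<..} \<subseteq> S)"
  have sing: "open {enat n}" for n
  proof (cases n)
    case 0
    have "{enat n} = {..<enat 1}" proof (intro set_eqI iffI)
      fix x assume "x \<in> {..<enat 1}" thus "x \<in> {enat n}" using 0 by (cases x) (auto simp: one_enat_def)
    next
      fix x assume "x \<in> {enat n}" thus "x \<in> {..<enat 1}" using 0 by simp
    qed
    thus ?thesis by simp
  next
    case (Suc m)
    have "{enat n} = {enat m<..<enat (Suc n)}"
      proof (intro set_eqI iffI)
      fix x assume "x \<in> {enat m<..<enat (Suc n)}" thus "x \<in> {enat n}" using Suc by (cases x) simp_all
    next
      fix x assume "x \<in> {enat n}" thus "x \<in> {enat m<..<enat (Suc n)}" using Suc by simp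
    qed
    thus ?thesis by simp
  qed
  show "open S"
    unfolding open_subopen[of S]
  proof
    fix x assume "x \<in> S"
    show "\<exists>T. open T \<and> x \<in> T \<and> T \<subseteq> S"
    proof (cases x)
      case (enat n) thus ?thesis using sing[of n] \<open>x \<in> S\<close> by (intro exI[of _ "{x}"]) simp
    next
      case infinity
      then obtain N where "{enat N<..} \<subseteq> S" using H \<open>x \<in> S\<close> by auto
      thus ?thesis using infinity by (intro exI[of _ "{enat N<..}"]) auto
    qed
  qed
qed

lemma enat_open_eventually:
  assumes "open (S::enat set)" "\<infinity> \<in> S"
  obtains N :: nat where "\<And>y. y > enat N \<Longrightarrow> y \<in> S"
proof - show ?thesis using assms that unfolding open_enat_iff[of S] by auto qed

theorem mainTheorem11:
  fixes X :: "'a topology" and U :: "'a set"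
  assumes "t1_space X" and "L_selective X" and "openin X U"
  shows "L_selective (subtopology X U)"
  unfolding L_selective_def selective_def
proof (intro allI impI)
  fix \<phi> :: "enat \<Rightarrow> 'a set"
  assume A: "(\<forall>y\<in>topspace euclidean. closedin (subtopology X U) (\<phi> y) \<and> \<phi> y \<noteq> {}) \<and> lsc_map euclidean (subtopology X U) \<phi>"
  have cl: "closedin (subtopology X U) (\<phi> y)" and ne: "\<phi> y \<noteq> {}" for y using A by auto
  have lsc: "\<And>V. openin (subtopology X U) V \<Longrightarrow> open {y. \<phi> y \<inter> V \<noteq> {}}"
    using A unfolding lsc_map_def by auto
  have sub: "\<phi> y \<subseteq> U \<inter> topspace X" for y using closedin_subset[OF cl[of y]] by auto
  obtain p where p: "p \<in> \<phi> \<infinity>" using ne by blast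
  have pU: "p \<in> U" "p \<in> topspace X" using p sub by auto
  define \<psi> where "\<psi> y = (if y = \<infinity> then {p} else X closure_of (\<phi> y))" for y
  have psi_cl: "\<forall>y\<in>topspace euclidean. closedin X (\<psi> y) \<and> \<psi> y \<noteq> {}"
  proof
    fix y :: enat
    show "closedin X (\<psi> y) \<and> \<psi> y \<noteq> {}"
    proof (cases "y = \<infinity>")
      case True thus ?thesis using pU \<open>t1_space X\<close> by (simp add: \<psi>_def closedin_t1_singleton)
    next
      case False
      have "\<phi> y \<subseteq> X closure_of \<phi> y" using sub[of y] by (intro closure_of_subset) auto
      thus ?thesis using False ne[of y] by (auto simp: \<psi>_def)
    qed
  qed
  have psi_lsc: "lsc_map euclidean X \<psi>"
    unfolding lsc_map_def
  proof (intro allI impI)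
    fix W assume W: "openin X W"
    have "open {y. \<psi> y \<inter> W \<noteq> {}}"
      unfolding open_enat_iff
    proof
      assume "\<infinity> \<in> {y. \<psi> y \<inter> W \<noteq> {}}"
      hence pW: "p \<in> W" by (simp add: \<psi>_def)
      have o: "openin (subtopology X U) (W \<inter> U)"
        using W by (simp add: openin_subtopology_Int)
      have "\<infinity> \<in> {y. \<phi> y \<inter> (W \<inter> U) \<noteq> {}}" using p pW pU by auto
      then obtain N :: nat where N0: "\<And>y. y > enat N \<Longrightarrow> y \<in> {y. \<phi> y \<inter> (W \<inter> U) \<noteq> {}}"
        by (rule enat_open_eventually[OF lsc[OF o]]) blast
      have N: "\<And>y. y > enat N \<Longrightarrow> \<phi> y \<inter> (W \<inter> U) \<noteq> {}" using N0 by simp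
      have "{enat N<..} \<subseteq> {y. \<psi> y \<inter> W \<noteq> {}}"
      proof
        fix y assume y: "y \<in> {enat N<..}"
        show "y \<in> {y. \<psi> y \<inter> W \<noteq> {}}"
        proof (cases "y = \<infinity>")
          case True thus ?thesis using pW by (simp add: \<psi>_def)
        next
          case False
          have "\<phi> y \<subseteq> X closure_of \<phi> y" using sub[of y] by (intro closure_of_subset) auto
          thus ?thesis using False N[of y] y by (auto simp: \<psi>_def)
        qed
      qed
      thus "\<exists>N::nat. {enat N<..} \<subseteq> {y. \<psi> y \<inter> W \<noteq> {}}" by blast
    qed
    thus "openin euclidean {y \<in> topspace euclidean. \<psi> y \<inter> W \<noteq> {}}" by simp
  qed
  obtain g where g: "continuous_map euclidean X g" "\<And>y. g y \<in> \<psi> y"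
    using \<open>L_selective X\<close> psi_cl psi_lsc unfolding L_selective_def selective_def by auto
  have ginf: "g \<infinity> = p" using g(2)[of \<infinity>] by (simp add: \<psi>_def)
  have gpre: "\<And>V. openin X V \<Longrightarrow> open {y. g y \<in> V}"
    using g(1) unfolding continuous_map_def by auto
  have "\<infinity> \<in> {y. g y \<in> U}" using ginf pU by simp
  then obtain M :: nat where M0: "\<And>y. y > enat M \<Longrightarrow> y \<in> {y. g y \<in> U}"
    by (rule enat_open_eventually[OF gpre[OF \<open>openin X U\<close>]]) blast
  have M: "\<And>y. y > enat M \<Longrightarrow> g y \<in> U" using M0 by simp
  define f where "f y = (if y > enat M then g y else (SOME z. z \<in> \<phi> y))" for y
  have fsel: "f y \<in> \<phi> y" for y
  proof (cases "y > enat M")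
    case True
    have "y = \<infinity> \<or> y \<noteq> \<infinity>" by blast
    moreover have "y \<noteq> \<infinity> \<Longrightarrow> g y \<in> \<phi> y"
    proof -
      assume "y \<noteq> \<infinity>"
      hence "g y \<in> X closure_of \<phi> y" using g(2)[of y] unfolding \<psi>_def by (metis)
      hence "g y \<in> (subtopology X U) closure_of \<phi> y"
        using M[OF True] sub[of y] by (simp add: closure_of_subtopology Int_absorb1)
      thus "g y \<in> \<phi> y" using closure_of_closedin[OF cl[of y]] by simp
    qed
    ultimately show ?thesis using True ginf p by (auto simp: f_def)
  next
    case False thus ?thesis using ne[of y] by (simp add: f_def some_in_eq)
  qed
  have fcont: "continuous_map euclidean X f"
    unfolding continuous_map_def
  proof (intro conjI allI impI ballI Pi_I)
    show "f y \<in> topspace X" if "y \<in> topspace euclidean" for y using fsel[of y] sub[of y] by auto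
  next
    fix V assume V: "openin X V"
    have "open {y. f y \<in> V}"
      unfolding open_enat_iff
    proof
      assume "\<infinity> \<in> {y. f y \<in> V}"
      hence "\<infinity> \<in> {y. g y \<in> V}" by (simp add: f_def)
      then obtain N :: nat where N0: "\<And>y. y > enat N \<Longrightarrow> y \<in> {y. g y \<in> V}"
        by (rule enat_open_eventually[OF gpre[OF V]]) blast
      have N: "\<And>y. y > enat N \<Longrightarrow> g y \<in> V" using N0 by simp
      have "{enat (max N M)<..} \<subseteq> {y. f y \<in> V}"
      proof
        fix y assume "y \<in> {enat (max N M)<..}"
        hence y: "enat (max N M) < y" by simp
        have "enat N \<le> enat (max N M)" "enat M \<le> enat (max N M)" by simp_all
        hence "enat N < y" "enat M < y" using y by (meson order_le_less_trans)+
        thus "y \<in> {y. f y \<in> V}" using N by (simp add: f_def)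
      qed
      thus "\<exists>N::nat. {enat N<..} \<subseteq> {y. f y \<in> V}" by blast
    qed
    thus "openin euclidean {x \<in> topspace euclidean. f x \<in> V}" by simp
  qed
  show "\<exists>f. continuous_map euclidean (subtopology X U) f \<and> (\<forall>y\<in>topspace euclidean. f y \<in> \<phi> y)"
  proof (intro exI conjI ballI)
    show "continuous_map euclidean (subtopology X U) f"
      using fcont fsel sub by (auto simp: continuous_map_in_subtopology)
    fix y :: enat show "f y \<in> \<phi> y" by (rule fsel)
  qed
qed

end
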